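(* In the three-door Monty Hall game described in the context, let $Q$ be an arbitrary mixed strategy of Monte and $\theta\in\{1,2,3\}$. If Monte's pure strategy $(\theta,y)$ with $y=\min(\{1,2,3\}\setminus\{\theta\})$ has positive probability under $Q$, then Conie's pure strategy $\theta\,\mathrm{s}\,\mathrm{h}$ is not Bayesian for $Q$. If Monte's pure strategy $(\theta,y)$ with $y=\max(\{1,2,3\}\setminus\{\theta\})$ has positive probability under $Q$, then $\theta\,\mathrm{h}\,\mathrm{s}$ is not Bayesian for $Q$.
   Context: Doors are numbered $1,2,3$. A pure strategy of Monte is a pair $(\theta,d)$ with $\theta\in\{1,2,3\}$ (the door hiding the prize) and $d\in\{1,2,3\}\setminus\{\theta\}$ (six strategies). A pure strategy of Conie is a triple $x\,a\,b$ with $x\in\{1,2,3\}$ and $a,b\in\{\mathrm{h},\mathrm{s}\}$ (twelve strategies). Under the profile $((\theta,d),x\,a\,b)$: Monte offers door $y=\theta$ if $x\neq\theta$ and $y=d$ if $x=\theta$; Conie's action is $a$ if $y$ is the smaller of the two doors in $\{1,2,3\}\setminus\{x\}$ and $b$ otherwise; her final choice is $z=x$ for action $\mathrm{h}$ and $z=y$ for action $\mathrm{s}$; she wins (payoff 1) iff $z=\theta$, else payoff 0. A mixed strategy is a probability distribution on pure strategies. For a mixed strategy $Q$ of Monte, a pure strategy of Conie is Bayesian if it maximizes Conie's winning probability against $Q$ among all (pure or mixed) strategies of Conie. *)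

theory Defs
  imports Complex_Main
begin

definition doors :: "nat set" where "doors = {1, 2, 3}"

datatype action = Hold | Switch

definition monte_strats :: "(nat \<times> nat) set" where
  "monte_strats = {(\<theta>, d). \<theta> \<in> doors \<and> d \<in> doors - {\<theta>}}"

definition conie_strats :: "(nat \<times> action \<times> action) set" where
  "conie_strats = {(x, a, b). x \<in> doors}"

definition payoff :: "nat \<times> nat \<Rightarrow> nat \<times> action \<times> action \<Rightarrow> real" where
  "payoff m c = (case m of (\<theta>, d) \<Rightarrow> case c of (x, a, b) \<Rightarrow>
     (let y = (if x \<noteq> \<theta> then \<theta> else d);
          act = (if y = Min (doors - {x}) then a else b);
          z = (if act = Hold then x else y)
      in if z = \<theta> then 1 else 0))"

definition mixed_on :: "'a set \<Rightarrow> ('a \<Rightarrow> real) \<Rightarrow> bool" where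
  "mixed_on S Q \<longleftrightarrow> (\<forall>s. 0 \<le> Q s) \<and> (\<forall>s. s \<notin> S \<longrightarrow> Q s = 0) \<and> sum Q S = 1"

definition win :: "(nat \<times> nat \<Rightarrow> real) \<Rightarrow> nat \<times> action \<times> action \<Rightarrow> real" where
  "win Q c = (\<Sum>m\<in>monte_strats. Q m * payoff m c)"

definition win_mixed :: "(nat \<times> nat \<Rightarrow> real) \<Rightarrow> (nat \<times> action \<times> action \<Rightarrow> real) \<Rightarrow> real" where
  "win_mixed Q P = (\<Sum>c\<in>conie_strats. P c * win Q c)"

definition bayesian :: "(nat \<times> nat \<Rightarrow> real) \<Rightarrow> nat \<times> action \<times> action \<Rightarrow> bool" where
  "bayesian Q c \<longleftrightarrow> c \<in> conie_strats \<and>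
     (\<forall>P. mixed_on conie_strats P \<longrightarrow> win_mixed Q P \<le> win Q c)"

end

theory Submission
  imports Defs
begin

lemma ms: "monte_strats = {(1,2),(1,3),(2,1),(2,3),(3,1),(3,2)}"
  unfolding monte_strats_def doors_def by auto

lemma actU: "(UNIV :: action set) = {Hold, Switch}"
  by (metis UNIV_eq_I action.exhaust insertCI singletonI)

lemma cs: "conie_strats = {1,2,3} \<times> (UNIV :: action set) \<times> (UNIV :: action set)"
  unfolding conie_strats_def doors_def by auto

lemma fin_act: "finite (UNIV :: action set)" unfolding actU by simp

lemma fin_cs: "finite conie_strats" unfolding cs by (intro finite_cartesian_product fin_act) simp

lemma notbayes:
  assumes "c0 \<in> conie_strats" "win Q c0 > win Q c"
  shows "\<not> bayesian Q c"
proof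
  assume b: "bayesian Q c"
  define P where "P = (\<lambda>c. if c = c0 then (1::real) else 0)"
  have "mixed_on conie_strats P"
    unfolding mixed_on_def P_def using assms(1) fin_cs by (simp add: sum.delta)
  moreover have "win_mixed Q P = (\<Sum>c\<in>conie_strats. if c = c0 then win Q c else 0)"
    unfolding win_mixed_def P_def by (rule sum.cong) auto
  then have w: "win_mixed Q P = win Q c0" using assms(1) fin_cs by (simp add: sum.delta)
  ultimately show False using w b assms(2) unfolding bayesian_def by auto
qed

lemma sumQ:
  assumes "mixed_on monte_strats Q"
  shows "Q(1,2)+Q(1,3)+Q(2,1)+Q(2,3)+Q(3,1)+Q(3,2) = 1"
    "\<And>s. Q s \<ge> 0"
  using assms unfolding mixed_on_def ms by auto

lemma MD: "Min (doors - {1}) = 2" "Min (doors - {Suc 0}) = 2" "Min (doors - {2}) = 1" "Min (doors - {3}) = 1"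
  "Max (doors - {1}) = 3" "Max (doors - {Suc 0}) = 3" "Max (doors - {2}) = 3" "Max (doors - {3}) = 2"
  unfolding doors_def by (auto simp: insert_Diff_if)

lemma winexp: "win Q c = Q(1,2) * payoff (1,2) c + Q(1,3) * payoff (1,3) c + Q(2,1) * payoff (2,1) c
  + Q(2,3) * payoff (2,3) c + Q(3,1) * payoff (3,1) c + Q(3,2) * payoff (3,2) c"
  unfolding win_def ms by simp

theorem mainTheorem4:
  fixes Q :: "nat \<times> nat \<Rightarrow> real" and \<theta> :: nat
  assumes "mixed_on monte_strats Q"
    and "\<theta> \<in> doors"
  shows "(Q (\<theta>, Min (doors - {\<theta>})) > 0 \<longrightarrow> \<not> bayesian Q (\<theta>, Switch, Hold))
       \<and> (Q (\<theta>, Max (doors - {\<theta>})) > 0 \<longrightarrow> \<not> bayesian Q (\<theta>, Hold, Switch))"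
proof -
  note s = sumQ[OF assms(1)]
  have c: "(x, a, b) \<in> conie_strats" if "x \<in> {1,2,3}" for x a b
    using that unfolding conie_strats_def doors_def by auto
  from assms(2) have "\<theta> = 1 \<or> \<theta> = 2 \<or> \<theta> = 3" unfolding doors_def by auto
  then show ?thesis
  proof (elim disjE)
    assume t: "\<theta> = 1"
    have w1: "win Q (1,Switch,Hold) = Q(1,3)+Q(2,1)+Q(2,3)" by (simp add: winexp payoff_def MD)
    have w2: "win Q (1,Hold,Switch) = Q(1,2)+Q(3,1)+Q(3,2)" by (simp add: winexp payoff_def MD)
    have w3: "win Q (3,Switch,Switch) = 1 - (Q(3,1)+Q(3,2))" using s(1) by (simp add: winexp payoff_def MD)
    have w4: "win Q (2,Switch,Switch) = 1 - (Q(2,1)+Q(2,3))" using s(1) by (simp add: winexp payoff_def MD)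
    show ?thesis unfolding t MD
    proof (intro conjI impI)
      assume "Q (1,2) > 0"
      then show "\<not> bayesian Q (1,Switch,Hold)"
        using s(1) s(2)[of "(3,2)"] w1 w3
        by (intro notbayes[OF c[of 3 Switch Switch]], simp, linarith)
    next
      assume "Q (1,3) > 0"
      then show "\<not> bayesian Q (1,Hold,Switch)"
        using s(1) w2 w4
        by (intro notbayes[OF c[of 2 Switch Switch]], simp, linarith)
    qed
  next
    assume t: "\<theta> = 2"
    have w1: "win Q (2,Switch,Hold) = Q(2,3)+Q(1,2)+Q(1,3)" by (simp add: winexp payoff_def MD)
    have w2: "win Q (2,Hold,Switch) = Q(2,1)+Q(3,1)+Q(3,2)" by (simp add: winexp payoff_def MD)
    have w3: "win Q (3,Switch,Switch) = 1 - (Q(3,1)+Q(3,2))" using s(1) by (simp add: winexp payoff_def MD)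
    have w4: "win Q (1,Switch,Switch) = 1 - (Q(1,2)+Q(1,3))" using s(1) by (simp add: winexp payoff_def MD)
    show ?thesis unfolding t MD
    proof (intro conjI impI)
      assume "Q (2,1) > 0"
      then show "\<not> bayesian Q (2,Switch,Hold)"
        using s(1) s(2)[of "(3,1)"] w1 w3
        by (intro notbayes[OF c[of 3 Switch Switch]], simp, linarith)
    next
      assume "Q (2,3) > 0"
      then show "\<not> bayesian Q (2,Hold,Switch)"
        using s(1) w2 w4
        by (intro notbayes[OF c[of 1 Switch Switch]], simp, linarith)
    qed
  next
    assume t: "\<theta> = 3"
    have w1: "win Q (3,Switch,Hold) = Q(3,2)+Q(1,2)+Q(1,3)" by (simp add: winexp payoff_def MD)
    have w2: "win Q (3,Hold,Switch) = Q(3,1)+Q(2,1)+Q(2,3)" by (simp add: winexp payoff_def MD)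
    have w3: "win Q (2,Switch,Switch) = 1 - (Q(2,1)+Q(2,3))" using s(1) by (simp add: winexp payoff_def MD)
    have w4: "win Q (1,Switch,Switch) = 1 - (Q(1,2)+Q(1,3))" using s(1) by (simp add: winexp payoff_def MD)
    show ?thesis unfolding t MD
    proof (intro conjI impI)
      assume "Q (3,1) > 0"
      then show "\<not> bayesian Q (3,Switch,Hold)"
        using s(1) s(2)[of "(2,1)"] w1 w3
        by (intro notbayes[OF c[of 2 Switch Switch]], simp, linarith)
    next
      assume "Q (3,2) > 0"
      then show "\<not> bayesian Q (3,Hold,Switch)"
        using s(1) w2 w4
        by (intro notbayes[OF c[of 1 Switch Switch]], simp, linarith)
    qed
  qed
qed

end
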